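(* Let $\mathbf C$ be a category of coframes and $(L,\nu_L)$ an adherence $\mathbf C$-object. (1) The quasi-closed elements of $L$ form a subcoframe of $L$ (closed under finite suprema and arbitrary infima). (2) The closed elements of $L$ form a sublattice of $L$ (closed under finite suprema and finite infima).
   Context: A category of coframes has coframes as objects and coframe morphisms. $\mathcal C_L$ is the set of complemented elements of $L$. An adherence $\mathbf C$-object is a $\mathbf C$-object $L$ with a monotone map $\nu_L:L\to L$ that preserves finite suprema of complemented elements and satisfies $\nu_L(\ell)=\bigwedge\{\nu_L(a):a\in\mathcal C_L,\ a\ge\ell\}$ for every $\ell\in L$. An element $c$ is quasi-closed if $\nu_L(c)\le c$, and closed if it is complemented and quasi-closed. *)

theory Defs
  imports Main
begin

definition coframe :: "'a::complete_lattice itself \<Rightarrow> bool" where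
  "coframe _ \<longleftrightarrow> (\<forall>(a::'a) S. sup a (Inf S) = (INF s\<in>S. sup a s))"

definition complemented_elems :: "'a::complete_lattice set" where
  "complemented_elems = {a. \<exists>b. inf a b = bot \<and> sup a b = top}"

definition adherence :: "('a::complete_lattice \<Rightarrow> 'a) \<Rightarrow> bool" where
  "adherence \<nu> \<longleftrightarrow>
     mono \<nu> \<and>
     \<nu> bot = bot \<and>
     (\<forall>a\<in>complemented_elems. \<forall>b\<in>complemented_elems. \<nu> (sup a b) = sup (\<nu> a) (\<nu> b)) \<and>
     (\<forall>l. \<nu> l = Inf {\<nu> a | a. a \<in> complemented_elems \<and> l \<le> a})"

definition quasi_closed :: "('a::complete_lattice \<Rightarrow> 'a) \<Rightarrow> 'a \<Rightarrow> bool" where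
  "quasi_closed \<nu> c \<longleftrightarrow> \<nu> c \<le> c"

definition closed_elem :: "('a::complete_lattice \<Rightarrow> 'a) \<Rightarrow> 'a \<Rightarrow> bool" where
  "closed_elem \<nu> c \<longleftrightarrow> c \<in> complemented_elems \<and> quasi_closed \<nu> c"

end

theory Submission
  imports Defs
begin

lemma cof_dist:
  assumes "coframe TYPE('a::complete_lattice)"
  shows "sup (a::'a) (Inf S) = (INF s\<in>S. sup a s)"
  using assms unfolding coframe_def by blast

lemma cof_sup_inf:
  assumes "coframe TYPE('a::complete_lattice)"
  shows "sup (a::'a) (inf b c) = inf (sup a b) (sup a c)"
  using cof_dist[OF assms, of a "{b,c}"] by simp

lemma cof_inf_sup:
  assumes "coframe TYPE('a::complete_lattice)"
  shows "inf (a::'a) (sup b c) = sup (inf a b) (inf a c)"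
proof -
  have "sup (inf a b) (inf a c) = inf (sup (inf a b) a) (sup (inf a b) c)"
    using cof_sup_inf[OF assms] by blast
  also have "\<dots> = inf a (sup c (inf a b))" by (simp add: sup_commute)
  also have "sup c (inf a b) = inf (sup c a) (sup c b)" using cof_sup_inf[OF assms] by blast
  also have "inf a (inf (sup c a) (sup c b)) = inf a (sup b c)"
  proof -
    have "inf a (sup c a) = a" by (simp add: inf.absorb1)
    then show ?thesis by (metis inf.assoc sup.commute)
  qed
  finally show ?thesis by simp
qed

lemma compl_sup:
  assumes cf: "coframe TYPE('a::complete_lattice)"
    and "(a::'a) \<in> complemented_elems" "b \<in> complemented_elems"
  shows "sup a b \<in> complemented_elems" "inf a b \<in> complemented_elems"
proof -
  obtain a' where a: "inf a a' = bot" "sup a a' = top" using assms(2) unfolding complemented_elems_def by blast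
  obtain b' where b: "inf b b' = bot" "sup b b' = top" using assms(3) unfolding complemented_elems_def by blast
  have "inf (inf a' b') (sup a b) = sup (inf (inf a' b') a) (inf (inf a' b') b)"
    using cof_inf_sup[OF cf] by blast
  also have "\<dots> = bot"
  proof -
    have "inf (inf a' b') a \<le> inf a a'" "inf (inf a' b') b \<le> inf b b'" by (auto intro: le_infI1 le_infI2)
    then show ?thesis using a b by (simp add: bot_unique)
  qed
  finally have 1: "inf (sup a b) (inf a' b') = bot" by (simp add: inf_commute)
  have "sup (sup a b) (inf a' b') = inf (sup (sup a b) a') (sup (sup a b) b')"
    using cof_sup_inf[OF cf] by blast
  also have "\<dots> = top"
  proof -
    have "sup a a' \<le> sup (sup a b) a'" "sup b b' \<le> sup (sup a b) b'" by (auto intro: le_supI1 le_supI2)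
    then show ?thesis using a b by (simp add: top_unique)
  qed
  finally show "sup a b \<in> complemented_elems" using 1 unfolding complemented_elems_def by blast
  have "inf (inf a b) (sup a' b') = sup (inf (inf a b) a') (inf (inf a b) b')"
    using cof_inf_sup[OF cf] by blast
  also have "\<dots> = bot"
  proof -
    have "inf (inf a b) a' \<le> inf a a'" "inf (inf a b) b' \<le> inf b b'" by (auto intro: le_infI1 le_infI2)
    then show ?thesis using a b by (simp add: bot_unique)
  qed
  finally have 2: "inf (inf a b) (sup a' b') = bot" .
  have "sup (sup a' b') (inf a b) = inf (sup (sup a' b') a) (sup (sup a' b') b)"
    using cof_sup_inf[OF cf] by blast
  also have "\<dots> = top"
  proof -
    have "sup a a' \<le> sup (sup a' b') a" "sup b b' \<le> sup (sup a' b') b" by (auto intro: le_supI1 le_supI2)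
    then show ?thesis using a b by (simp add: top_unique)
  qed
  finally have 3: "sup (inf a b) (sup a' b') = top" by (simp add: sup_commute)
  show "inf a b \<in> complemented_elems" using 2 3 unfolding complemented_elems_def by blast
qed

theorem mainTheorem20:
  fixes \<nu> :: "'a::complete_lattice \<Rightarrow> 'a"
  assumes "coframe TYPE('a)"
    and "adherence \<nu>"
  shows "(quasi_closed \<nu> bot
          \<and> (\<forall>a b. quasi_closed \<nu> a \<longrightarrow> quasi_closed \<nu> b \<longrightarrow> quasi_closed \<nu> (sup a b))
          \<and> (\<forall>S. (\<forall>s\<in>S. quasi_closed \<nu> s) \<longrightarrow> quasi_closed \<nu> (Inf S)))
       \<and> (closed_elem \<nu> bot \<and> closed_elem \<nu> top
          \<and> (\<forall>a b. closed_elem \<nu> a \<longrightarrow> closed_elem \<nu> b \<longrightarrow> closed_elem \<nu> (sup a b))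
          \<and> (\<forall>a b. closed_elem \<nu> a \<longrightarrow> closed_elem \<nu> b \<longrightarrow> closed_elem \<nu> (inf a b)))"
proof -
  note cf = assms(1)
  have mono: "mono \<nu>" and nb: "\<nu> bot = bot"
    and ns: "\<And>a b. a\<in>complemented_elems \<Longrightarrow> b\<in>complemented_elems \<Longrightarrow> \<nu> (sup a b) = sup (\<nu> a) (\<nu> b)"
    and ni: "\<And>l. \<nu> l = Inf {\<nu> a | a. a \<in> complemented_elems \<and> l \<le> a}"
    using assms(2) unfolding adherence_def by blast+
  have q0: "quasi_closed \<nu> bot" using nb unfolding quasi_closed_def by simp
  have qinf: "quasi_closed \<nu> (Inf S)" if "\<forall>s\<in>S. quasi_closed \<nu> s" for S
    unfolding quasi_closed_def
  proof (rule Inf_greatest)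
    fix s assume "s \<in> S"
    then have "\<nu> (Inf S) \<le> \<nu> s" by (meson Inf_lower mono monoD)
    also have "\<nu> s \<le> s" using that \<open>s\<in>S\<close> unfolding quasi_closed_def by blast
    finally show "\<nu> (Inf S) \<le> s" .
  qed
  have qsup: "quasi_closed \<nu> (sup a b)" if qa: "quasi_closed \<nu> a" and qb: "quasi_closed \<nu> b" for a b
  proof -
    define X where "X = {\<nu> c | c. c \<in> complemented_elems \<and> a \<le> c}"
    define Y where "Y = {\<nu> c | c. c \<in> complemented_elems \<and> b \<le> c}"
    have xy: "\<nu> (sup a b) \<le> sup x y" if "x \<in> X" "y \<in> Y" for x y
    proof -
      obtain c where c: "x = \<nu> c" "c \<in> complemented_elems" "a \<le> c" using \<open>x\<in>X\<close> X_def by blast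
      obtain d where d: "y = \<nu> d" "d \<in> complemented_elems" "b \<le> d" using \<open>y\<in>Y\<close> Y_def by blast
      have "\<nu> (sup a b) \<le> \<nu> (sup c d)" using c d by (meson mono monoD sup_mono)
      also have "\<dots> = sup x y" using ns c d by simp
      finally show ?thesis .
    qed
    have "\<nu> (sup a b) \<le> sup x (\<nu> b)" if "x \<in> X" for x
    proof -
      have "\<nu> (sup a b) \<le> (INF y\<in>Y. sup x y)" using xy that by (simp add: le_INF_iff)
      also have "\<dots> = sup x (Inf Y)" using cof_dist[OF cf] by simp
      finally show ?thesis using ni[of b] Y_def by simp
    qed
    then have "\<nu> (sup a b) \<le> (INF x\<in>X. sup (\<nu> b) x)" by (simp add: le_INF_iff sup_commute)
    also have "\<dots> = sup (\<nu> b) (Inf X)" using cof_dist[OF cf] by simp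
    also have "\<dots> = sup (\<nu> b) (\<nu> a)" using ni[of a] X_def by simp
    also have "\<dots> \<le> sup a b" using qa qb unfolding quasi_closed_def by (simp add: le_supI1 le_supI2)
    finally show ?thesis unfolding quasi_closed_def .
  qed
  have cb: "bot \<in> complemented_elems" "top \<in> complemented_elems"
    unfolding complemented_elems_def by auto
  have qi2: "quasi_closed \<nu> (inf a b)" if "quasi_closed \<nu> a" "quasi_closed \<nu> b" for a b
    using qinf[of "{a,b}"] that by simp
  have c0: "closed_elem \<nu> bot" using cb q0 unfolding closed_elem_def by blast
  have c1: "closed_elem \<nu> top" using cb unfolding closed_elem_def quasi_closed_def by simp
  have c2: "closed_elem \<nu> (sup a b)" if "closed_elem \<nu> a" "closed_elem \<nu> b" for a b
    using that qsup compl_sup(1)[OF cf] unfolding closed_elem_def by blast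
  have c3: "closed_elem \<nu> (inf a b)" if "closed_elem \<nu> a" "closed_elem \<nu> b" for a b
    using that qi2 compl_sup(2)[OF cf] unfolding closed_elem_def by blast
  show ?thesis
    using q0 qinf qsup c0 c1 c2 c3 by blast
qed

end
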